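(* Let $X$ be a real Hilbert space of dimension $d$ with unit ball $\mathcal B$, $V\subseteq X$ a subspace, $\Omega\subseteq X$ a symmetric convex set, and $R>0$, and suppose $\mathcal B/V\subseteq R(\Omega\cap\mathcal B)/V$. Then there is a linear map $T:X\to X$ with $\|T\|_{op}\le dR$ such that for all $x\in X$: $x-Tx\in V$ and $Tx\in dR|x|(\Omega\cap\mathcal B)$.
   Context: For $A\subseteq X$, $A/V=\{a+V:a\in A\}\subseteq X/V$; thus $\mathcal B/V\subseteq R(\Omega\cap\mathcal B)/V$ means every $b\in\mathcal B$ differs from some element of $R(\Omega\cap\mathcal B)$ by an element of $V$. *)

theory Defs
  imports "HOL-Analysis.Analysis"
begin

end

theory Submission
  imports Defs
begin

lemma K_scale:
  fixes K :: "'a::real_vector set"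
  assumes "convex K" "0 \<in> K" "z \<in> K" "0 \<le> c" "c \<le> 1"
  shows "c *\<^sub>R z \<in> K"
proof -
  have "c *\<^sub>R z + (1 - c) *\<^sub>R 0 \<in> K"
    using assms by (intro convexD) auto
  thus ?thesis by simp
qed

theorem lemma8p3:
  fixes V \<Omega> :: "'a::euclidean_space set" and R :: real
  assumes "subspace V"
    and "convex \<Omega>" and "\<forall>x\<in>\<Omega>. - x \<in> \<Omega>"
    and "R > 0"
    and "\<forall>b\<in>cball 0 1. \<exists>y\<in>(\<lambda>z. R *\<^sub>R z) ` (\<Omega> \<inter> cball 0 1). b - y \<in> V"
  shows "\<exists>T. linear T \<and> onorm T \<le> real DIM('a) * R \<and>
           (\<forall>x. x - T x \<in> V \<and>
                T x \<in> (\<lambda>z. (real DIM('a) * R * norm x) *\<^sub>R z) ` (\<Omega> \<inter> cball 0 1))"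
proof -
  define K where "K = \<Omega> \<inter> cball 0 1"
  have cK: "convex K" unfolding K_def using assms(2) by (simp add: convex_Int)
  have sK: "\<And>k. k \<in> K \<Longrightarrow> - k \<in> K" unfolding K_def using assms(3) by auto
  have ex: "\<forall>b\<in>cball 0 1. \<exists>w. w \<in> K \<and> b - R *\<^sub>R w \<in> V"
    using assms(5) unfolding K_def by blast
  obtain w where w0': "\<forall>b\<in>cball 0 1. w b \<in> K \<and> b - R *\<^sub>R w b \<in> V"
    using bchoice[OF ex] by blast
  hence w: "\<And>b. b \<in> cball 0 1 \<Longrightarrow> w b \<in> K \<and> b - R *\<^sub>R w b \<in> V" by blast
  have "(0::'a) \<in> cball 0 1" by simp
  then have w0: "w 0 \<in> K" using w by blast
  have K0: "0 \<in> K"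
  proof -
    have "(1/2) *\<^sub>R w 0 + (1 - 1/2) *\<^sub>R (- w 0) \<in> K"
      by (rule convexD[OF cK w0 sK[OF w0]]) auto
    thus ?thesis by (simp add: algebra_simps)
  qed
  have wB: "\<And>i. i \<in> Basis \<Longrightarrow> w i \<in> K \<and> i - R *\<^sub>R w i \<in> V"
    using w by (simp add: norm_Basis)
  define T where "T x = (\<Sum>i\<in>Basis. (x \<bullet> i) *\<^sub>R (R *\<^sub>R w i))" for x
  have lin: "linear T"
    unfolding T_def
    by (intro linearI) (simp_all add: inner_add_left algebra_simps sum.distrib scaleR_sum_right)
  have V: "x - T x \<in> V" for x
  proof -
    have "x - T x = (\<Sum>i\<in>Basis. (x \<bullet> i) *\<^sub>R (i - R *\<^sub>R w i))"
      unfolding T_def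
      by (simp add: scaleR_diff_right sum_subtractf euclidean_representation)
    also have "\<dots> \<in> V"
      using assms(1) wB by (intro subspace_sum subspace_scale) auto
    finally show ?thesis .
  qed
  have img: "T x \<in> (\<lambda>z. (real DIM('a) * R * norm x) *\<^sub>R z) ` K" for x
  proof (cases "x = 0")
    case True
    have "T x = (real DIM('a) * R * norm x) *\<^sub>R 0" using True by (simp add: T_def)
    thus ?thesis using K0 by blast
  next
    case False
    define s where "s = (\<Sum>i\<in>Basis. \<bar>x \<bullet> i\<bar>)"
    define v where "v i = (if x \<bullet> i \<ge> 0 then w i else - w i)" for i
    have vK: "i \<in> Basis \<Longrightarrow> v i \<in> K" for i using wB sK by (simp add: v_def)
    have xv: "(x \<bullet> i) *\<^sub>R w i = \<bar>x \<bullet> i\<bar> *\<^sub>R v i" for i by (simp add: v_def)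
    have spos: "s > 0"
    proof -
      obtain i where i: "i \<in> Basis" "x \<bullet> i \<noteq> 0" using False euclidean_all_zero_iff by blast
      have "\<bar>x \<bullet> i\<bar> \<le> s" unfolding s_def
        using i by (intro member_le_sum) auto
      thus ?thesis using i by linarith
    qed
    define u where "u = (\<Sum>i\<in>Basis. (\<bar>x \<bullet> i\<bar> / s) *\<^sub>R v i)"
    have uK: "u \<in> K" unfolding u_def
    proof (rule convex_sum[OF _ cK])
      show "(\<Sum>i\<in>Basis. \<bar>x \<bullet> i\<bar> / s) = 1" using spos by (simp add: s_def sum_divide_distrib[symmetric])
    qed (use vK spos in auto)
    have Tx: "T x = (R * s) *\<^sub>R u"
    proof -
      have "T x = (\<Sum>i\<in>Basis. R *\<^sub>R ((x \<bullet> i) *\<^sub>R w i))" unfolding T_def by (simp add: mult.commute)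
      also have "\<dots> = (\<Sum>i\<in>Basis. R *\<^sub>R (\<bar>x \<bullet> i\<bar> *\<^sub>R v i))" by (simp only: xv)
      also have "\<dots> = (R * s) *\<^sub>R u" unfolding u_def using spos
        by (simp add: scaleR_sum_right)
      finally show ?thesis .
    qed
    have sle: "s \<le> real DIM('a) * norm x"
    proof -
      have "s \<le> (\<Sum>i\<in>(Basis::'a set). norm x)" unfolding s_def
        by (intro sum_mono) (simp add: Basis_le_norm)
      thus ?thesis by simp
    qed
    have tpos: "real DIM('a) * norm x > 0" using spos sle by linarith
    define z where "z = (s / (real DIM('a) * norm x)) *\<^sub>R u"
    have zK: "z \<in> K" unfolding z_def using spos sle tpos
      by (intro K_scale[OF cK K0 uK]) auto
    have eq: "(real DIM('a) * R * norm x) * (s / (real DIM('a) * norm x)) = R * s"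
      using tpos False by (simp add: divide_simps)
    have "T x = (real DIM('a) * R * norm x) *\<^sub>R z"
      unfolding Tx z_def by (simp only: scaleR_scaleR eq)
    thus ?thesis using zK by blast
  qed
  have on: "onorm T \<le> real DIM('a) * R"
  proof (rule onorm_le)
    fix x
    obtain z where z: "z \<in> K" "T x = (real DIM('a) * R * norm x) *\<^sub>R z" using img by blast
    have "norm z \<le> 1" using z(1) by (simp add: K_def)
    hence "norm (T x) \<le> (real DIM('a) * R * norm x) * 1"
      using z(2) assms(4) by (simp add: mult_left_mono mult_le_cancel_left1 mult_left_le)
    thus "norm (T x) \<le> real DIM('a) * R * norm x" by simp
  qed
  show ?thesis
    apply (rule exI[of _ T])
    using lin on V img unfolding K_def by simp
qed

end
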